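(* For every $n\ge 3$, the Grothendieck constant of the circuit (cycle) $C_n$ of length $n$ is $\kappa(C_n)=\frac{n}{n-2}\cos\left(\frac{\pi}{n}\right)$.
   Context: For a graph $G=([n],E)$ and $w\in\mathbb{R}^E$, let $\mathrm{ip}(G,w)=\max_{x\in\{\pm1\}^n}\sum_{ij\in E}w_{ij}x_ix_j$ and $\mathrm{sdp}(G,w)=\max\sum_{ij\in E}w_{ij}u_i^Tu_j$, the maximum over unit vectors $u_1,\dots,u_n\in\mathbb{R}^n$. The Grothendieck constant of $G$ is $\kappa(G)=\sup_{w\in\mathbb{R}^E}\mathrm{sdp}(G,w)/\mathrm{ip}(G,w)$. *)

theory Defs
  imports Complex_Main
begin

text \<open>A graph on the vertex set [n] = {0..<n} is given by its edge set E, a set of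
  pairs (i,j) with i < j < n (each undirected edge listed once).
  Edge weights are functions w from pairs to reals (only values on E matter).
  Vectors in R^n are functions nat => real, of which only the coordinates k < n matter.\<close>

definition ip :: "nat \<Rightarrow> (nat \<times> nat) set \<Rightarrow> (nat \<times> nat \<Rightarrow> real) \<Rightarrow> real" where
  "ip n E w = Max {(\<Sum>(i,j)\<in>E. w (i,j) * x i * x j) | x :: nat \<Rightarrow> real.
                     (\<forall>i<n. x i \<in> {-1, 1}) \<and> (\<forall>i\<ge>n. x i = 0)}"

definition sdp :: "nat \<Rightarrow> (nat \<times> nat) set \<Rightarrow> (nat \<times> nat \<Rightarrow> real) \<Rightarrow> real" where
  "sdp n E w = Sup {(\<Sum>(i,j)\<in>E. w (i,j) * (\<Sum>k<n. u i k * u j k)) | u :: nat \<Rightarrow> nat \<Rightarrow> real.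
                     \<forall>i<n. (\<Sum>k<n. (u i k)\<^sup>2) = 1}"

definition grothendieck_const :: "nat \<Rightarrow> (nat \<times> nat) set \<Rightarrow> real" where
  "grothendieck_const n E = (SUP w. sdp n E w / ip n E w)"

definition cycle_edges :: "nat \<Rightarrow> (nat \<times> nat) set" where
  "cycle_edges n = {(i, i + 1) | i. i + 1 < n} \<union> {(0, n - 1)}"

end

theory Submission
  imports Defs "HOL-Analysis.Convex"
begin


lemma tangent_cos:
  fixes t a :: real
  assumes "0 < t" "t \<le> pi/2" "0 \<le> a" "a \<le> pi - t"
  shows "cos a \<le> cos t - sin t * (a - t)"
proof -
  have der: "\<And>x. DERIV cos x :> - sin x" by (auto intro!: derivative_eq_intros)
  consider "a = t" | "a < t" | "t < a" by linarith
  then show ?thesis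
  proof cases
    case 1 then show ?thesis by simp
  next
    case 2
    obtain z where z: "a < z" "z < t" "cos t - cos a = (t - a) * - sin z"
      using MVT2[OF 2, of cos "\<lambda>x. - sin x"] der by blast
    have "sin z \<le> sin t" using z assms by (intro sin_monotone_2pi_le) auto
    then have "(t - a) * sin z \<le> (t - a) * sin t" using 2 by (intro mult_left_mono) auto
    then show ?thesis using z by (simp add: algebra_simps)
  next
    case 3
    obtain z where z: "t < z" "z < a" "cos a - cos t = (a - t) * - sin z"
      using MVT2[OF 3, of cos "\<lambda>x. - sin x"] der by blast
    have "sin t \<le> sin z"
    proof (cases "z \<le> pi/2")
      case True then show ?thesis using z assms by (intro sin_monotone_2pi_le) auto
    next
      case False
      have "sin t \<le> sin (pi - z)" using z assms False by (intro sin_monotone_2pi_le) auto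
      then show ?thesis by simp
    qed
    then have "(a - t) * sin t \<le> (a - t) * sin z" using 3 by (intro mult_left_mono) auto
    then show ?thesis using z by (simp add: algebra_simps)
  qed
qed

lemma cos_pin_bound:
  assumes "3 \<le> n"
  shows "real n - 1 \<le> (real n + 1) * cos (pi / real n)"
proof -
  consider "n = 3" | "n = 4" | "5 \<le> n" using assms by linarith
  then show ?thesis
  proof cases
    case 1 then show ?thesis by (simp add: cos_60)
  next
    case 2
    have "6 \<le> 5 * sqrt (2::real)"
    proof -
      have "(6::real)^2 \<le> (5 * sqrt 2)^2" by (simp add: power_mult_distrib)
      then show ?thesis by (rule power2_le_imp_le) auto
    qed
    then show ?thesis using 2 by (simp add: cos_45)
  next
    case 3
    define t where "t = pi / real n"
    have t0: "0 \<le> t" unfolding t_def by simp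
    have tp: "t \<le> pi" unfolding t_def using 3 by (simp add: divide_simps)
    have "sin (t/2) \<le> t/2" using t0 by (intro sin_x_le_x) auto
    moreover have "0 \<le> sin (t/2)" using t0 tp by (intro sin_ge_zero) auto
    ultimately have s: "sin (t/2) ^ 2 \<le> (t/2)^2" by (intro power_mono) auto
    have "cos t = 1 - 2 * sin (t/2) ^ 2" using cos_double_sin[of "t/2"] by simp
    with s have c: "1 - t^2/2 \<le> cos t" by (simp add: power_divide)
    have tl: "t \<le> 4 / real n" unfolding t_def using pi_less_4 3
      by (simp add: divide_right_mono)
    have "t^2 \<le> (4 / real n)^2" using tl t0 by (intro power_mono) auto
    then have "1 - 8 / (real n)^2 \<le> cos t" using c by (simp add: power_divide)
    moreover have "real n - 1 \<le> (real n + 1) * (1 - 8 / (real n)^2)"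
    proof -
      have n5: "5 \<le> real n" using 3 by simp
      have "real n - 1 \<le> (real n + 1) - 8 * (real n + 1) / (real n)^2"
      proof -
        have h: "0 \<le> (real n - 5) * real n" using n5 by simp
        have "8 * (real n + 1) \<le> 2 * (real n)^2" using h n5
          unfolding power2_eq_square left_diff_distrib by (smt (verit))
        then have "8 * (real n + 1) / (real n)^2 \<le> 2" using n5 by (simp add: divide_simps)
        then show ?thesis by linarith
      qed
      then show ?thesis by (simp add: algebra_simps)
    qed
    ultimately show ?thesis unfolding t_def
      by (smt (verit) mult_left_mono of_nat_0_le_iff)
  qed
qed

lemma key_cos:
  fixes \<alpha> :: "nat \<Rightarrow> real"
  assumes n: "3 \<le> n" and a: "\<And>k. k < n \<Longrightarrow> 0 \<le> \<alpha> k \<and> \<alpha> k \<le> pi"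
    and s: "pi \<le> (\<Sum>k<n. \<alpha> k)"
  shows "(\<Sum>k<n. cos (\<alpha> k)) \<le> real n * cos (pi / real n)"
proof -
  define t where "t = pi / real n"
  have t0: "0 < t" unfolding t_def using n by simp
  have t2: "t \<le> pi/2" unfolding t_def using n by (simp add: divide_simps)
  have nt: "real n * t = pi" unfolding t_def using n by simp
  show ?thesis
  proof (cases "\<forall>k<n. \<alpha> k \<le> pi - t")
    case True
    have "(\<Sum>k<n. cos (\<alpha> k)) \<le> (\<Sum>k<n. cos t - sin t * (\<alpha> k - t))"
      using True a t0 t2 by (intro sum_mono tangent_cos) auto
    also have "\<dots> = real n * cos t - sin t * ((\<Sum>k<n. \<alpha> k) - real n * t)"
      by (simp add: sum_subtractf sum_distrib_left[symmetric] algebra_simps)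
    also have "\<dots> \<le> real n * cos t"
    proof -
      have "0 \<le> sin t" using t0 t2 by (intro sin_ge_zero) auto
      then show ?thesis using s nt by (simp add: mult_nonneg_nonneg)
    qed
    finally show ?thesis unfolding t_def .
  next
    case False
    then obtain j where j: "j < n" "pi - t < \<alpha> j" by auto
    have "cos (\<alpha> j) < cos (pi - t)" using j a t2 t0 by (intro cos_monotone_0_pi) auto
    then have cj: "cos (\<alpha> j) \<le> - cos t" by simp
    have "(\<Sum>k<n. cos (\<alpha> k)) = cos (\<alpha> j) + (\<Sum>k\<in>{..<n}-{j}. cos (\<alpha> k))"
      using j by (simp add: sum.remove)
    also have "(\<Sum>k\<in>{..<n}-{j}. cos (\<alpha> k)) \<le> (\<Sum>k\<in>{..<n}-{j}. 1)"
      by (intro sum_mono) auto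
    also have "\<dots> = real n - 1" using j by simp
    finally have "(\<Sum>k<n. cos (\<alpha> k)) \<le> - cos t + (real n - 1)" using cj by linarith
    also have "\<dots> \<le> real n * cos t" using cos_pin_bound[OF n] unfolding t_def
      by (simp add: algebra_simps)
    finally show ?thesis unfolding t_def .
  qed
qed



definition dotn :: "nat \<Rightarrow> (nat \<Rightarrow> real) \<Rightarrow> (nat \<Rightarrow> real) \<Rightarrow> real" where
  "dotn n a b = (\<Sum>k<n. a k * b k)"

lemma dotn_cs: "(dotn n a b)^2 \<le> dotn n a a * dotn n b b"
  unfolding dotn_def using Cauchy_Schwarz_ineq_sum[of a b "{..<n}"] by (simp add: power2_eq_square)

lemma dotn_le1:
  assumes "dotn n a a = 1" "dotn n b b = 1"
  shows "\<bar>dotn n a b\<bar> \<le> 1"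
proof -
  have "(dotn n a b)^2 \<le> 1^2" using dotn_cs[of n a b] assms by simp
  then show ?thesis using abs_le_square_iff[of "dotn n a b" 1] by simp
qed

lemma dotn_lin:
  "dotn n (\<lambda>k. a k - p * b k) (\<lambda>k. c k - q * b k)
     = dotn n a c - q * dotn n a b - p * dotn n b c + p * q * dotn n b b"
  unfolding dotn_def
  by (simp add: algebra_simps sum_subtractf sum.distrib sum_distrib_left)

lemma dotn_sym: "dotn n a b = dotn n b a"
  unfolding dotn_def by (simp add: mult.commute)

lemma sph_tri:
  assumes a: "dotn n a a = 1" and b: "dotn n b b = 1" and c: "dotn n c c = 1"
  shows "arccos (dotn n a c) \<le> arccos (dotn n a b) + arccos (dotn n b c)"
proof -
  define p where "p = dotn n a b"
  define q where "q = dotn n b c"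
  define r where "r = dotn n a c"
  have p1: "\<bar>p\<bar> \<le> 1" unfolding p_def using dotn_le1 a b by blast
  have q1: "\<bar>q\<bar> \<le> 1" unfolding q_def using dotn_le1 b c by blast
  have r1: "\<bar>r\<bar> \<le> 1" unfolding r_def using dotn_le1 a c by blast
  define \<beta> where "\<beta> = arccos p"
  define \<gamma> where "\<gamma> = arccos q"
  have \<beta>b: "0 \<le> \<beta>" "\<beta> \<le> pi" unfolding \<beta>_def using p1 arccos_bounded by auto
  have \<gamma>b: "0 \<le> \<gamma>" "\<gamma> \<le> pi" unfolding \<gamma>_def using q1 arccos_bounded by auto
  have rpi: "arccos r \<le> pi" using r1 arccos_bounded by auto
  show ?thesis
  proof (cases "pi \<le> \<beta> + \<gamma>")
    case True
    then show ?thesis using rpi unfolding \<beta>_def \<gamma>_def p_def q_def r_def by linarith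
  next
    case False
    have cbg: "cos (\<beta> + \<gamma>) = p * q - sqrt (1 - p^2) * sqrt (1 - q^2)"
      unfolding cos_add \<beta>_def \<gamma>_def using p1 q1 by (simp add: sin_arccos)
    have e1: "dotn n (\<lambda>k. a k - p * b k) (\<lambda>k. c k - q * b k) = r - p * q"
      using dotn_lin[of n a p b c q] b dotn_sym[of n b a]
      unfolding p_def q_def r_def by (simp add: algebra_simps)
    have e2: "dotn n (\<lambda>k. a k - p * b k) (\<lambda>k. a k - p * b k) = 1 - p^2"
      using dotn_lin[of n a p b a p] a b dotn_sym[of n b a]
      unfolding p_def by (simp add: algebra_simps power2_eq_square)
    have e3: "dotn n (\<lambda>k. c k - q * b k) (\<lambda>k. c k - q * b k) = 1 - q^2"
      using dotn_lin[of n c q b c q] c b dotn_sym[of n b c]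
      unfolding q_def by (simp add: algebra_simps power2_eq_square)
    have "(r - p * q)^2 \<le> (1 - p^2) * (1 - q^2)"
      using dotn_cs[of n "\<lambda>k. a k - p * b k" "\<lambda>k. c k - q * b k"] e1 e2 e3 by simp
    then have "sqrt ((r - p * q)^2) \<le> sqrt ((1 - p^2) * (1 - q^2))"
      by (rule real_sqrt_le_mono)
    then have "\<bar>r - p * q\<bar> \<le> sqrt (1 - p^2) * sqrt (1 - q^2)"
      by (simp add: real_sqrt_mult)
    then have le: "cos (\<beta> + \<gamma>) \<le> r" using cbg by linarith
    have "arccos r \<le> arccos (cos (\<beta> + \<gamma>))"
      using le r1 by (intro arccos_le_arccos) auto
    also have "\<dots> = \<beta> + \<gamma>" using \<beta>b \<gamma>b False by (intro arccos_cos) auto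
    finally show ?thesis unfolding \<beta>_def \<gamma>_def p_def q_def r_def .
  qed
qed



lemma cycle_edges_sum:
  assumes n: "3 \<le> n"
  shows "(\<Sum>(i,j)\<in>cycle_edges n. F i j) = (\<Sum>k<n-1. F k (Suc k)) + F 0 (n-1)"
proof -
  have eq: "cycle_edges n = (\<lambda>k. (k, Suc k)) ` {..<n-1} \<union> {(0, n-1)}"
    unfolding cycle_edges_def by auto
  have disj: "(\<lambda>k. (k, Suc k)) ` {..<n-1} \<inter> {(0, n-1)} = {}" using n by auto
  have inj: "inj_on (\<lambda>k. (k, Suc k)) {..<n-1}" by (auto simp: inj_on_def)
  have "(\<Sum>(i,j)\<in>cycle_edges n. F i j) =
      (\<Sum>(i,j)\<in>(\<lambda>k. (k, Suc k)) ` {..<n-1}. F i j) + (\<Sum>(i,j)\<in>{(0, n-1)}. F i j)"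
    unfolding eq by (rule sum.union_disjoint) (use disj in auto)
  also have "(\<Sum>(i,j)\<in>(\<lambda>k. (k, Suc k)) ` {..<n-1}. F i j) = (\<Sum>k<n-1. F k (Suc k))"
    by (subst sum.reindex[OF inj]) simp
  finally show ?thesis by simp
qed

definition pmset :: "nat \<Rightarrow> (nat \<Rightarrow> real) set" where
  "pmset n = {x. (\<forall>i<n. x i \<in> {-1, 1}) \<and> (\<forall>i\<ge>n. x i = 0)}"

lemma finite_pmset: "finite (pmset n)"
proof -
  have "pmset n \<subseteq> (\<lambda>f i. if i < n then f i else 0) ` (PiE {..<n} (\<lambda>_. {-1, 1::real}))"
  proof
    fix x assume x: "x \<in> pmset n"
    have "x = (\<lambda>i. if i < n then restrict x {..<n} i else 0)"
      using x unfolding pmset_def by (auto simp: fun_eq_iff)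
    moreover have "restrict x {..<n} \<in> PiE {..<n} (\<lambda>_. {-1, 1::real})"
      using x unfolding pmset_def by auto
    ultimately show "x \<in> (\<lambda>f i. if i < n then f i else 0) ` (PiE {..<n} (\<lambda>_. {-1, 1::real}))"
      by blast
  qed
  then show ?thesis by (rule finite_subset) (intro finite_imageI finite_PiE, auto)
qed

lemma ip_alt: "ip n E w = Max ((\<lambda>x. \<Sum>(i,j)\<in>E. w (i,j) * x i * x j) ` pmset n)"
  unfolding ip_def pmset_def by (rule arg_cong[where f=Max]) auto

lemma pmset_ne: "(\<lambda>i. if i < n then 1 else 0) \<in> pmset n"
  unfolding pmset_def by auto

lemma ip_ge:
  assumes "x \<in> pmset n"
  shows "(\<Sum>(i,j)\<in>E. w (i,j) * x i * x j) \<le> ip n E w"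
  unfolding ip_alt using assms finite_pmset by (intro Max_ge) auto

lemma ip_le:
  assumes "\<And>x. x \<in> pmset n \<Longrightarrow> (\<Sum>(i,j)\<in>E. w (i,j) * x i * x j) \<le> B"
  shows "ip n E w \<le> B"
  unfolding ip_alt using assms finite_pmset pmset_ne
  by (subst Max_le_iff) auto

definition sg :: "real \<Rightarrow> real" where "sg x = (if 0 \<le> x then 1 else -1)"

lemma sg_sq [simp]: "sg x * sg x = 1" unfolding sg_def by simp
lemma sg_abs: "sg x * \<bar>x\<bar> = x" unfolding sg_def by simp
lemma sg_mult_self: "sg x * x = \<bar>x\<bar>" unfolding sg_def by simp

definition PP :: "(nat \<times> nat \<Rightarrow> real) \<Rightarrow> nat \<Rightarrow> real" where
  "PP w i = (\<Prod>k<i. sg (w (k, Suc k)))"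

lemma PP_sq [simp]: "PP w i * PP w i = 1"
  unfolding PP_def by (induction i) (auto simp: algebra_simps)

lemma PP_Suc: "PP w (Suc i) = PP w i * sg (w (i, Suc i))"
  unfolding PP_def by simp

lemma PP_0 [simp]: "PP w 0 = 1" unfolding PP_def by simp

lemma chain:
  assumes v: "\<And>i. i < N \<Longrightarrow> dotn n (v i) (v i) = 1" and m: "m < N"
  shows "arccos (dotn n (v 0) (v m)) \<le> (\<Sum>k<m. arccos (dotn n (v k) (v (Suc k))))"
  using m
proof (induction m)
  case 0
  then show ?case using v[of 0] by simp
next
  case (Suc m)
  have "arccos (dotn n (v 0) (v (Suc m))) \<le> arccos (dotn n (v 0) (v m)) + arccos (dotn n (v m) (v (Suc m)))"
    using Suc.prems by (intro sph_tri v) auto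
  then show ?case using Suc by simp
qed



definition xj :: "(nat \<times> nat \<Rightarrow> real) \<Rightarrow> nat \<Rightarrow> nat \<Rightarrow> nat \<Rightarrow> real" where
  "xj w n j i = (if i < n then PP w i * (if i \<le> j then 1 else -1) else 0)"

lemma PP_pm: "PP w i = 1 \<or> PP w i = -1"
proof -
  have "(PP w i)^2 = 1" using PP_sq[of w i] by (simp add: power2_eq_square)
  then show ?thesis by (simp only: power2_eq_1_iff)
qed

lemma xj_pm: "xj w n j \<in> pmset n"
  unfolding pmset_def xj_def using PP_pm[of w] by fastforce

definition tau :: "nat \<Rightarrow> (nat \<times> nat \<Rightarrow> real) \<Rightarrow> real" where
  "tau n w = sg (w (0, n-1)) * PP w (n-1)"

lemma val_xj:
  assumes n: "3 \<le> n"
  shows "(\<Sum>(i,i')\<in>cycle_edges n. w (i,i') * xj w n j i * xj w n j i') =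
    (\<Sum>k<n-1. \<bar>w (k, Suc k)\<bar> * ((if k \<le> j then 1 else -1) * (if Suc k \<le> j then 1 else -1)))
    + tau n w * \<bar>w (0, n-1)\<bar> * (if n - 1 \<le> j then 1 else -1)"
proof -
  have "(\<Sum>(i,i')\<in>cycle_edges n. w (i,i') * xj w n j i * xj w n j i') =
    (\<Sum>k<n-1. w (k, Suc k) * xj w n j k * xj w n j (Suc k)) + w (0, n-1) * xj w n j 0 * xj w n j (n-1)"
    using cycle_edges_sum[OF n] .
  also have "(\<Sum>k<n-1. w (k, Suc k) * xj w n j k * xj w n j (Suc k)) =
     (\<Sum>k<n-1. \<bar>w (k, Suc k)\<bar> * ((if k \<le> j then 1 else -1) * (if Suc k \<le> j then 1 else -1)))"
  proof (rule sum.cong)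
    fix k assume k0: "k \<in> {..<n-1}"
    then have k: "k < n" "Suc k < n" by auto
    have "w (k, Suc k) * xj w n j k * xj w n j (Suc k) =
      (sg (w (k, Suc k)) * w (k, Suc k)) * (PP w k * PP w k) * ((if k \<le> j then 1 else -1) * (if Suc k \<le> j then 1 else -1))"
      using k unfolding xj_def PP_Suc by (simp add: algebra_simps)
    then show "w (k, Suc k) * xj w n j k * xj w n j (Suc k) =
      \<bar>w (k, Suc k)\<bar> * ((if k \<le> j then 1 else -1) * (if Suc k \<le> j then 1 else -1))"
      by (simp only: sg_mult_self PP_sq mult_1_right)
  qed simp
  also have "w (0, n-1) * xj w n j 0 * xj w n j (n-1) = tau n w * \<bar>w (0, n-1)\<bar> * (if n - 1 \<le> j then 1 else -1)"
  proof -
    have "w (0, n-1) * xj w n j 0 * xj w n j (n-1) = (sg (w (0, n-1)) * \<bar>w (0, n-1)\<bar>) * PP w (n-1) * (if n - 1 \<le> j then 1 else -1)"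
      using n unfolding xj_def sg_abs by simp
    then show ?thesis unfolding tau_def by (simp add: algebra_simps)
  qed
  finally show ?thesis .
qed

lemma ipA:
  assumes n: "3 \<le> n"
  shows "(\<Sum>k<n-1. \<bar>w (k, Suc k)\<bar>) + tau n w * \<bar>w (0, n-1)\<bar> \<le> ip n (cycle_edges n) w"
proof -
  have eq: "(\<Sum>(i,i')\<in>cycle_edges n. w (i,i') * xj w n (n-1) i * xj w n (n-1) i') =
     (\<Sum>k<n-1. \<bar>w (k, Suc k)\<bar>) + tau n w * \<bar>w (0, n-1)\<bar>"
    unfolding val_xj[OF n] by (intro arg_cong2[where f="(+)"] sum.cong) auto
  have le: "(\<Sum>(i,i')\<in>cycle_edges n. w (i,i') * xj w n (n-1) i * xj w n (n-1) i') \<le> ip n (cycle_edges n) w"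
    by (rule ip_ge[OF xj_pm])
  show ?thesis using le unfolding eq .
qed

lemma ipB:
  assumes n: "3 \<le> n" and j: "j < n - 1"
  shows "(\<Sum>k<n-1. \<bar>w (k, Suc k)\<bar>) - 2 * \<bar>w (j, Suc j)\<bar> - tau n w * \<bar>w (0, n-1)\<bar> \<le> ip n (cycle_edges n) w"
proof -
  have "(\<Sum>k<n-1. \<bar>w (k, Suc k)\<bar> * ((if k \<le> j then 1 else -1) * (if Suc k \<le> j then 1 else -1)))
      = (\<Sum>k<n-1. \<bar>w (k, Suc k)\<bar> - (if k = j then 2 * \<bar>w (k, Suc k)\<bar> else 0))"
    by (intro sum.cong) auto
  also have "\<dots> = (\<Sum>k<n-1. \<bar>w (k, Suc k)\<bar>) - 2 * \<bar>w (j, Suc j)\<bar>"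
    using j by (simp add: sum_subtractf)
  finally have e: "(\<Sum>k<n-1. \<bar>w (k, Suc k)\<bar> * ((if k \<le> j then 1 else -1) * (if Suc k \<le> j then 1 else -1)))
      = (\<Sum>k<n-1. \<bar>w (k, Suc k)\<bar>) - 2 * \<bar>w (j, Suc j)\<bar>" .
  have eq: "(\<Sum>(i,i')\<in>cycle_edges n. w (i,i') * xj w n j i * xj w n j i') =
     (\<Sum>k<n-1. \<bar>w (k, Suc k)\<bar>) - 2 * \<bar>w (j, Suc j)\<bar> - tau n w * \<bar>w (0, n-1)\<bar>"
    unfolding val_xj[OF n] e using j by simp
  have le: "(\<Sum>(i,i')\<in>cycle_edges n. w (i,i') * xj w n j i * xj w n j i') \<le> ip n (cycle_edges n) w"
    by (rule ip_ge[OF xj_pm])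
  show ?thesis using le unfolding eq .
qed



lemma C_facts:
  assumes n: "3 \<le> n"
  shows "real n / (real n - 2) * cos (pi / real n) * (real n - 2) = real n * cos (pi / real n)"
    "1 \<le> real n / (real n - 2) * cos (pi / real n)"
proof -
  show "real n / (real n - 2) * cos (pi / real n) * (real n - 2) = real n * cos (pi / real n)"
    using n by (simp add: field_simps)
  have c1: "cos (pi / real n) \<le> 1" by simp
  have h: "real n - 1 \<le> (real n + 1) * cos (pi / real n)" using cos_pin_bound[OF n] .
  have "(real n + 1) * cos (pi / real n) = real n * cos (pi / real n) + cos (pi / real n)"
    by (simp add: algebra_simps)
  then have "real n - 2 \<le> real n * cos (pi / real n)" using h c1 by linarith
  then show "1 \<le> real n / (real n - 2) * cos (pi / real n)" using n by (simp add: field_simps)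
qed

lemma PP_sq2 [simp]: "PP w i * (PP w i * x) = x"
  by (simp add: mult.assoc[symmetric])

lemma tau_pm: "tau n w = 1 \<or> tau n w = -1"
  unfolding tau_def sg_def using PP_pm[of w "n-1"] by auto

lemma upper:
  assumes n: "3 \<le> n" and u: "\<forall>i<n. (\<Sum>k<n. (u i k)\<^sup>2) = 1"
  shows "(\<Sum>(i,j)\<in>cycle_edges n. w (i,j) * (\<Sum>k<n. u i k * u j k))
           \<le> real n / (real n - 2) * cos (pi / real n) * ip n (cycle_edges n) w
         \<and> 0 \<le> ip n (cycle_edges n) w"
proof -
  define C where "C = real n / (real n - 2) * cos (pi / real n)"
  have C1: "1 \<le> C" and Cn: "C * (real n - 2) = real n * cos (pi / real n)"
    unfolding C_def using C_facts[OF n] by auto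
  define D where "D i j = (\<Sum>k<n. u i k * u j k)" for i j
  define v where "v i k = PP w i * u i k" for i k
  have vunit: "dotn n (v i) (v i) = 1" if "i < n" for i
  proof -
    have "dotn n (v i) (v i) = (\<Sum>k<n. (u i k)\<^sup>2)"
      unfolding dotn_def v_def
    proof (rule sum.cong)
      fix k
      have "PP w i * u i k * (PP w i * u i k) = (PP w i * PP w i) * (u i k)\<^sup>2"
        by (simp add: power2_eq_square)
      then show "PP w i * u i k * (PP w i * u i k) = (u i k)\<^sup>2" by simp
    qed simp
    then show ?thesis using u that by simp
  qed
  have vpath: "dotn n (v k) (v (Suc k)) = sg (w (k, Suc k)) * D k (Suc k)" for k
  proof -
    have "dotn n (v k) (v (Suc k)) = (PP w k * PP w k) * sg (w (k, Suc k)) * D k (Suc k)"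
      unfolding dotn_def v_def D_def PP_Suc by (simp add: sum_distrib_left algebra_simps)
    then show ?thesis by simp
  qed
  have vclose: "tau n w * dotn n (v 0) (v (n-1)) = sg (w (0, n-1)) * D 0 (n-1)"
  proof -
    have "tau n w * dotn n (v 0) (v (n-1)) = sg (w (0, n-1)) * (PP w (n-1) * PP w (n-1)) * D 0 (n-1)"
      unfolding tau_def dotn_def v_def D_def by (simp add: sum_distrib_left algebra_simps)
    then show ?thesis by simp
  qed
  define A where "A k = (if k < n-1 then \<bar>w (k, Suc k)\<bar> else \<bar>w (0, n-1)\<bar>)" for k
  define c where "c k = (if k < n-1 then dotn n (v k) (v (Suc k)) else tau n w * dotn n (v 0) (v (n-1)))" for k
  have nS: "n = Suc (n-1)" using n by simp
  have sumA: "(\<Sum>k<n. A k) = (\<Sum>k<n-1. \<bar>w (k, Suc k)\<bar>) + \<bar>w (0, n-1)\<bar>"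
    by (subst nS, subst sum.lessThan_Suc) (simp add: A_def)
  have S: "(\<Sum>(i,j)\<in>cycle_edges n. w (i,j) * D i j) = (\<Sum>k<n. A k * c k)"
  proof -
    have "(\<Sum>(i,j)\<in>cycle_edges n. w (i,j) * D i j) = (\<Sum>k<n-1. w (k, Suc k) * D k (Suc k)) + w (0, n-1) * D 0 (n-1)"
      using cycle_edges_sum[OF n] .
    also have "(\<Sum>k<n-1. w (k, Suc k) * D k (Suc k)) = (\<Sum>k<n-1. A k * c k)"
    proof (rule sum.cong)
      fix k assume "k \<in> {..<n-1}"
      then have "A k * c k = \<bar>w (k, Suc k)\<bar> * sg (w (k, Suc k)) * D k (Suc k)"
        unfolding A_def c_def vpath by simp
      then show "w (k, Suc k) * D k (Suc k) = A k * c k" using sg_abs[of "w (k, Suc k)"]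
        by (simp add: algebra_simps)
    qed simp
    also have "w (0, n-1) * D 0 (n-1) = A (n-1) * c (n-1)"
      unfolding A_def c_def vclose using sg_abs[of "w (0, n-1)"] by (simp add: algebra_simps)
    also have "(\<Sum>k<n-1. A k * c k) + A (n-1) * c (n-1) = (\<Sum>k<n. A k * c k)"
      by (subst (2) nS, subst sum.lessThan_Suc) simp
    finally show ?thesis .
  qed
  have A0: "0 \<le> A k" for k unfolding A_def by auto
  have c1: "\<bar>c k\<bar> \<le> 1" if "k < n" for k
  proof (cases "k < n-1")
    case True then show ?thesis unfolding c_def using dotn_le1 vunit that by simp
  next
    case False
    have "\<bar>dotn n (v 0) (v (n-1))\<bar> \<le> 1" using dotn_le1 vunit n by simp
    then show ?thesis unfolding c_def using False tau_pm[of n w] by auto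
  qed
  have Sle: "(\<Sum>k<n. A k * c k) \<le> (\<Sum>k<n. A k)"
  proof (rule sum_mono)
    fix k assume "k \<in> {..<n}"
    then have "c k \<le> 1" using c1 by fastforce
    then show "A k * c k \<le> A k" using A0[of k] by (simp add: mult_left_le)
  qed
  have main: "(\<Sum>k<n. A k * c k) \<le> C * ip n (cycle_edges n) w \<and> 0 \<le> ip n (cycle_edges n) w"
  proof (cases "tau n w = 1")
    case True
    have ipA': "(\<Sum>k<n. A k) \<le> ip n (cycle_edges n) w" using ipA[OF n, of w] True sumA by simp
    have "0 \<le> (\<Sum>k<n. A k)" using A0 by (simp add: sum_nonneg)
    then have ip0: "0 \<le> ip n (cycle_edges n) w" using ipA' by linarith
    have "ip n (cycle_edges n) w \<le> C * ip n (cycle_edges n) w" using C1 ip0 by (simp add: mult_le_cancel_right1)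
    then show ?thesis using Sle ipA' ip0 by linarith
  next
    case False
    then have tm: "tau n w = -1" using tau_pm by blast
    define \<alpha> where "\<alpha> k = arccos (c k)" for k
    have \<alpha>b: "0 \<le> \<alpha> k \<and> \<alpha> k \<le> pi" if "k < n" for k
      unfolding \<alpha>_def using c1[OF that] arccos_bounded by auto
    have "pi \<le> (\<Sum>k<n. \<alpha> k)"
    proof -
      have "(\<Sum>k<n. \<alpha> k) = (\<Sum>k<n-1. arccos (dotn n (v k) (v (Suc k)))) + arccos (- dotn n (v 0) (v (n-1)))"
        by (subst nS, subst sum.lessThan_Suc) (simp add: \<alpha>_def c_def tm)
      moreover have "arccos (dotn n (v 0) (v (n-1))) \<le> (\<Sum>k<n-1. arccos (dotn n (v k) (v (Suc k))))"
        using n by (intro chain[of n]) (auto intro: vunit)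
      moreover have "arccos (- dotn n (v 0) (v (n-1))) = pi - arccos (dotn n (v 0) (v (n-1)))"
        using dotn_le1[OF vunit vunit, of 0 "n-1"] n by (intro arccos_minus) auto
      ultimately show ?thesis by linarith
    qed
    then have "(\<Sum>k<n. cos (\<alpha> k)) \<le> real n * cos (pi / real n)"
      using key_cos[OF n] \<alpha>b by blast
    moreover have "(\<Sum>k<n. cos (\<alpha> k)) = (\<Sum>k<n. c k)"
      unfolding \<alpha>_def using c1 by (intro sum.cong) (auto simp: abs_le_iff)
    ultimately have sc: "(\<Sum>k<n. c k) \<le> real n * cos (pi / real n)" by simp
    obtain j where j: "j < n" "\<And>k. k < n \<Longrightarrow> A j \<le> A k"
    proof -
      have "0 \<in> {..<n}" using n by simp
      then have "A ` {..<n} \<noteq> {}" by blast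
      then have "Min (A ` {..<n}) \<in> A ` {..<n}" by (intro Min_in) auto
      then obtain j where "j < n" "A j = Min (A ` {..<n})" by auto
      then show ?thesis using that by (metis Min_le finite_imageI finite_lessThan imageI lessThan_iff)
    qed
    have ipj: "(\<Sum>k<n. A k) - 2 * A j \<le> ip n (cycle_edges n) w"
    proof (cases "j < n - 1")
      case True
      then show ?thesis using ipB[OF n True, of w] tm sumA unfolding A_def by simp
    next
      case False
      then have "j = n - 1" using j by simp
      then show ?thesis using ipA[OF n, of w] tm sumA unfolding A_def by simp
    qed
    have nA: "real n * A j \<le> (\<Sum>k<n. A k)"
    proof -
      have "(\<Sum>k<n. A j) \<le> (\<Sum>k<n. A k)" using j by (intro sum_mono) auto
      then show ?thesis by simp
    qed
    have "(\<Sum>k<n. A k * c k) = A j * (\<Sum>k<n. c k) + (\<Sum>k<n. (A k - A j) * c k)"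
      by (simp add: sum_distrib_left left_diff_distrib sum_subtractf)
    also have "(\<Sum>k<n. (A k - A j) * c k) \<le> (\<Sum>k<n. (A k - A j))"
    proof (rule sum_mono)
      fix k assume "k \<in> {..<n}"
      then have "c k \<le> 1" "A j \<le> A k" using c1 j by fastforce+
      then show "(A k - A j) * c k \<le> A k - A j" by (simp add: mult_left_le)
    qed
    also have "A j * (\<Sum>k<n. c k) \<le> A j * (real n * cos (pi / real n))"
      using sc A0 by (simp add: mult_left_mono)
    finally have "(\<Sum>k<n. A k * c k) \<le> A j * (C * (real n - 2)) + ((\<Sum>k<n. A k) - real n * A j)"
      unfolding Cn by (simp add: sum_subtractf)
    also have "\<dots> \<le> A j * (C * (real n - 2)) + C * ((\<Sum>k<n. A k) - real n * A j)"
      using C1 nA by (simp add: mult_le_cancel_right1)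
    also have "\<dots> = C * ((\<Sum>k<n. A k) - 2 * A j)" by (simp add: algebra_simps)
    also have "\<dots> \<le> C * ip n (cycle_edges n) w" using ipj C1 by (simp add: mult_left_mono)
    finally have 1: "(\<Sum>k<n. A k * c k) \<le> C * ip n (cycle_edges n) w" .
    have "2 * A j \<le> real n * A j" using n A0[of j] by (intro mult_right_mono) auto
    then have "0 \<le> ip n (cycle_edges n) w" using ipj nA by linarith
    with 1 show ?thesis by blast
  qed
  then have "(\<Sum>(i,j)\<in>cycle_edges n. w (i,j) * D i j) \<le> C * ip n (cycle_edges n) w
         \<and> 0 \<le> ip n (cycle_edges n) w" by (simp only: S)
  then show ?thesis unfolding C_def D_def .
qed



definition sdpset :: "nat \<Rightarrow> (nat \<times> nat) set \<Rightarrow> (nat \<times> nat \<Rightarrow> real) \<Rightarrow> real set" where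
  "sdpset n E w = {(\<Sum>(i,j)\<in>E. w (i,j) * (\<Sum>k<n. u i k * u j k)) | u :: nat \<Rightarrow> nat \<Rightarrow> real.
                     \<forall>i<n. (\<Sum>k<n. (u i k)\<^sup>2) = 1}"

lemma unit_ex:
  fixes n :: nat
  assumes n: "0 < n"
  shows "\<forall>i<n. (\<Sum>k<n. ((\<lambda>i k. if k = 0 then 1 else 0::real) i k)\<^sup>2) = 1"
proof -
  have "(\<Sum>k<n. (if k = 0 then 1 else 0::real)\<^sup>2) = (\<Sum>k<n. (if k = 0 then 1 else 0::real))"
    by (intro sum.cong) auto
  also have "\<dots> = 1" using n by (subst sum.delta) auto
  finally show ?thesis by simp
qed

lemma sdp_alt: "sdp n E w = Sup (sdpset n E w)"
  unfolding sdp_def sdpset_def ..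

lemma sdpset_ne:
  assumes "0 < n" shows "sdpset n E w \<noteq> {}"
proof -
  have u: "\<forall>i<n. (\<Sum>k<n. ((\<lambda>i k. if k = 0 then 1 else 0::real) i k)\<^sup>2) = 1" using unit_ex assms .
  have "(\<Sum>(i,j)\<in>E. w (i,j) * (\<Sum>k<n. (\<lambda>i k. if k = 0 then 1 else 0::real) i k * (\<lambda>i k. if k = 0 then 1 else 0::real) j k)) \<in> sdpset n E w"
    unfolding sdpset_def mem_Collect_eq by (rule exI, rule conjI[OF refl u])
  then show ?thesis by auto
qed

lemma sdpset_bound:
  assumes n: "3 \<le> n" and s: "s \<in> sdpset n (cycle_edges n) w"
  shows "s \<le> real n / (real n - 2) * cos (pi / real n) * ip n (cycle_edges n) w"
proof -
  from s obtain u where seq: "s = (\<Sum>(i,j)\<in>cycle_edges n. w (i,j) * (\<Sum>k<n. u i k * u j k))"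
    and u: "\<forall>i<n. (\<Sum>k<n. (u i k)\<^sup>2) = 1"
    unfolding sdpset_def mem_Collect_eq by blast
  show ?thesis unfolding seq by (rule conjunct1[OF upper[OF n u]])
qed

lemma sdp_le:
  assumes n: "3 \<le> n"
  shows "sdp n (cycle_edges n) w \<le> real n / (real n - 2) * cos (pi / real n) * ip n (cycle_edges n) w"
  unfolding sdp_alt using n sdpset_ne[of n] sdpset_bound[OF n]
  by (intro cSup_least) auto

lemma ip_nonneg:
  assumes n: "3 \<le> n" shows "0 \<le> ip n (cycle_edges n) w"
proof -
  have u: "\<forall>i<n. (\<Sum>k<n. ((\<lambda>i k. if k = 0 then 1 else 0::real) i k)\<^sup>2) = 1" using unit_ex n by simp
  from upper[OF n u, of w] show ?thesis by (rule conjunct2)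
qed

lemma ratio_le:
  assumes n: "3 \<le> n"
  shows "sdp n (cycle_edges n) w / ip n (cycle_edges n) w \<le> real n / (real n - 2) * cos (pi / real n)"
proof (cases "ip n (cycle_edges n) w = 0")
  case True
  then show ?thesis using C_facts(2)[OF n] by simp
next
  case False
  then have "0 < ip n (cycle_edges n) w" using ip_nonneg[OF n, of w] by simp
  then show ?thesis using sdp_le[OF n, of w] by (simp add: pos_divide_le_eq)
qed

lemma pm_prod:
  assumes x: "x \<in> pmset n" and m: "m < n"
  shows "x 0 * x m = (\<Prod>k<m. x k * x (Suc k))"
  using m
proof (induction m)
  case 0
  have "x 0 \<in> {-1, 1}" using x 0 unfolding pmset_def by auto
  then show ?case by auto
next
  case (Suc m)
  have "x m \<in> {-1, 1}" using x Suc.prems unfolding pmset_def by auto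
  then have sq: "x m * x m = 1" by auto
  have "x 0 * x (Suc m) = (x 0 * x m) * (x m * x (Suc m))" using sq by (simp add: algebra_simps)
  then show ?case using Suc by simp
qed

lemma prod_neg: "(\<Prod>k<m. - (p k :: real)) = (-1)^m * (\<Prod>k<m. p k)"
  by (induction m) (auto simp: algebra_simps)

lemma sum_minus_prod:
  assumes "\<And>k. k < m \<Longrightarrow> p k = 1 \<or> p k = (-1::real)"
  shows "(\<Sum>k<m. p k) - (\<Prod>k<m. p k) \<le> real m - 1"
proof (cases "\<forall>k<m. p k = 1")
  case True
  then show ?thesis by simp
next
  case False
  then obtain j where j: "j < m" "p j = -1" using assms by blast
  have "(\<Sum>k<m. p k) = p j + (\<Sum>k\<in>{..<m}-{j}. p k)" using j by (simp add: sum.remove)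
  also have "(\<Sum>k\<in>{..<m}-{j}. p k) \<le> (\<Sum>k\<in>{..<m}-{j}. 1)"
    using assms by (intro sum_mono) (smt (verit) DiffD1 lessThan_iff)
  finally have s: "(\<Sum>k<m. p k) \<le> -1 + (real m - 1)" using j by simp
  have "\<bar>\<Prod>k<m. p k\<bar> = (\<Prod>k<m. \<bar>p k\<bar>)" by (simp add: prod.distrib abs_prod)
  also have "\<dots> = 1" using assms by (intro prod.neutral) fastforce
  finally have "- (\<Prod>k<m. p k) \<le> 1" by linarith
  then show ?thesis using s by linarith
qed

definition w0 :: "nat \<Rightarrow> nat \<times> nat \<Rightarrow> real" where
  "w0 n e = (if e = (0, n-1) then (-1)^n else -1)"

lemma w0_path: "3 \<le> n \<Longrightarrow> k < n - 1 \<Longrightarrow> w0 n (k, Suc k) = -1"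
  unfolding w0_def by auto

lemma ip_w0_le:
  assumes n: "3 \<le> n"
  shows "ip n (cycle_edges n) (w0 n) \<le> real n - 2"
proof (rule ip_le)
  fix x assume x: "x \<in> pmset n"
  define p where "p k = - (x k * x (Suc k))" for k
  have pm: "p k = 1 \<or> p k = -1" if "k < n - 1" for k
  proof -
    have "x k \<in> {-1,1}" "x (Suc k) \<in> {-1,1}" using x that unfolding pmset_def by auto
    then show ?thesis unfolding p_def by auto
  qed
  have "(\<Sum>(i,j)\<in>cycle_edges n. w0 n (i,j) * x i * x j) =
      (\<Sum>k<n-1. w0 n (k, Suc k) * x k * x (Suc k)) + w0 n (0, n-1) * x 0 * x (n-1)"
    using cycle_edges_sum[OF n] .
  also have "(\<Sum>k<n-1. w0 n (k, Suc k) * x k * x (Suc k)) = (\<Sum>k<n-1. p k)"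
    using n by (intro sum.cong) (auto simp: w0_path p_def)
  also have "w0 n (0, n-1) * x 0 * x (n-1) = - (\<Prod>k<n-1. p k)"
  proof -
    have "x 0 * x (n-1) = (\<Prod>k<n-1. x k * x (Suc k))" using pm_prod[OF x, of "n-1"] n by simp
    also have "\<dots> = (\<Prod>k<n-1. - p k)" unfolding p_def by simp
    also have "\<dots> = (-1)^(n-1) * (\<Prod>k<n-1. p k)" by (rule prod_neg)
    finally have e: "x 0 * x (n-1) = (-1)^(n-1) * (\<Prod>k<n-1. p k)" .
    have nn: "(-1::real)^n = - ((-1)^(n-1))" using n
      by (metis Suc_diff_1 less_le_trans mult_minus1 power_Suc zero_less_numeral)
    have "w0 n (0, n-1) * x 0 * x (n-1) = (-1)^n * (x 0 * x (n-1))"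
      unfolding w0_def by simp
    also have "\<dots> = - ((-1)^(n-1)) * ((-1)^(n-1) * (\<Prod>k<n-1. p k))" unfolding e nn ..
    also have "\<dots> = - (((-1)^(n-1) * (-1)^(n-1)) * (\<Prod>k<n-1. p k))" by (simp only: mult.assoc minus_mult_left)
    also have "(-1::real)^(n-1) * (-1)^(n-1) = 1" by (simp add: power_add[symmetric])
    finally show ?thesis by simp
  qed
  finally have "(\<Sum>(i,j)\<in>cycle_edges n. w0 n (i,j) * x i * x j) = (\<Sum>k<n-1. p k) - (\<Prod>k<n-1. p k)"
    by simp
  also have "\<dots> \<le> real (n-1) - 1" using pm by (intro sum_minus_prod) auto
  finally show "(\<Sum>(i,j)\<in>cycle_edges n. w0 n (i,j) * x i * x j) \<le> real n - 2" using n by simp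
qed

lemma ip_w0_ge:
  assumes n: "3 \<le> n"
  shows "real n - 2 \<le> ip n (cycle_edges n) (w0 n)"
proof -
  have PPw: "PP (w0 n) i = (-1)^i" if "i \<le> n - 1" for i
    using that
  proof (induction i)
    case 0 then show ?case by simp
  next
    case (Suc i)
    then show ?case using n by (simp add: PP_Suc w0_path sg_def)
  qed
  have sgn: "sg ((-1)^n) = (-1::real)^n" unfolding sg_def by (cases "even n") auto
  have "tau n (w0 n) = (-1)^n * (-1)^(n-1)" unfolding tau_def using PPw[of "n-1"]
    by (simp add: w0_def sgn)
  also have "\<dots> = -1"
  proof -
    have "(-1::real)^n = - ((-1)^(n-1))" using n
      by (metis Suc_diff_1 less_le_trans mult_minus1 power_Suc zero_less_numeral)
    then show ?thesis by (simp add: power_add[symmetric])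
  qed
  finally have t: "tau n (w0 n) = -1" .
  have "(\<Sum>k<n-1. \<bar>w0 n (k, Suc k)\<bar>) = (\<Sum>k<n-1. 1)" using n by (intro sum.cong) (auto simp: w0_path)
  then have s: "(\<Sum>k<n-1. \<bar>w0 n (k, Suc k)\<bar>) = real n - 1" using n by simp
  have "\<bar>w0 n (0, n-1)\<bar> = 1" unfolding w0_def by simp
  then show ?thesis using ipA[OF n, of "w0 n"] t s by simp
qed

lemma sdp_w0:
  assumes n: "3 \<le> n"
  shows "real n * cos (pi / real n) \<le> sdp n (cycle_edges n) (w0 n)"
proof -
  define t where "t = pi / real n"
  define \<beta> where "\<beta> = pi - t"
  define u :: "nat \<Rightarrow> nat \<Rightarrow> real" where
    "u i k = (if k = 0 then cos (real i * \<beta>) else if k = 1 then sin (real i * \<beta>) else 0)" for i k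
  have two: "(\<Sum>k<n. (if k = 0 then a else if k = 1 then b else 0)) = (a::real) + b" for a b
  proof -
    have "(\<Sum>k<n. (if k = 0 then a else if k = 1 then b else 0)) = (\<Sum>k<n. (if k = 0 then a else 0) + (if k = 1 then b else 0))"
      by (intro sum.cong) auto
    also have "\<dots> = a + b" using n by (simp add: sum.distrib)
    finally show ?thesis .
  qed
  have unit: "\<forall>i<n. (\<Sum>k<n. (u i k)\<^sup>2) = 1"
  proof (intro allI impI)
    fix i
    have "(\<Sum>k<n. (u i k)\<^sup>2) = (\<Sum>k<n. (if k = 0 then (cos (real i * \<beta>))\<^sup>2 else if k = 1 then (sin (real i * \<beta>))\<^sup>2 else 0))"
      unfolding u_def by (intro sum.cong) auto
    also have "\<dots> = (cos (real i * \<beta>))\<^sup>2 + (sin (real i * \<beta>))\<^sup>2"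
      by (rule two)
    finally show "(\<Sum>k<n. (u i k)\<^sup>2) = 1" by simp
  qed
  have D: "(\<Sum>k<n. u i k * u j k) = cos (real j * \<beta> - real i * \<beta>)" for i j
  proof -
    have "(\<Sum>k<n. u i k * u j k) = (\<Sum>k<n. (if k = 0 then cos (real i * \<beta>) * cos (real j * \<beta>) else if k = 1 then sin (real i * \<beta>) * sin (real j * \<beta>) else 0))"
      unfolding u_def by (intro sum.cong) auto
    also have "\<dots> = cos (real i * \<beta>) * cos (real j * \<beta>) + sin (real i * \<beta>) * sin (real j * \<beta>)"
      by (rule two)
    finally show ?thesis by (simp add: cos_diff algebra_simps)
  qed
  have path: "w0 n (k, Suc k) * (\<Sum>k'<n. u k k' * u (Suc k) k') = cos t" if "k < n - 1" for k
  proof -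
    have "real (Suc k) * \<beta> - real k * \<beta> = pi - t" unfolding \<beta>_def by (simp add: algebra_simps)
    then show ?thesis using that n by (simp add: D w0_path)
  qed
  have close: "w0 n (0, n-1) * (\<Sum>k<n. u 0 k * u (n-1) k) = cos t"
  proof -
    have "real (n-1) * \<beta> - real 0 * \<beta> = real (n-2) * pi + t"
      using n unfolding \<beta>_def t_def by (simp add: of_nat_diff field_simps)
    then have "(\<Sum>k<n. u 0 k * u (n-1) k) = cos (real (n-2) * pi + t)" by (simp add: D)
    also have "\<dots> = (-1)^(n-2) * cos t" by (simp add: cos_add)
    finally have e: "(\<Sum>k<n. u 0 k * u (n-1) k) = (-1)^(n-2) * cos t" .
    have "(-1::real)^n = (-1)^(n-2)"
    proof -
      have "n = (n-2) + 2" using n by simp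
      then have "(-1::real)^n = (-1)^(n-2) * (-1)^2" by (metis power_add)
      then show ?thesis by simp
    qed
    then show ?thesis unfolding w0_def using e by (simp add: power_add[symmetric])
  qed
  have val: "(\<Sum>(i,j)\<in>cycle_edges n. w0 n (i,j) * (\<Sum>k<n. u i k * u j k)) = real n * cos t"
  proof -
    have "(\<Sum>(i,j)\<in>cycle_edges n. w0 n (i,j) * (\<Sum>k<n. u i k * u j k)) =
       (\<Sum>k<n-1. w0 n (k, Suc k) * (\<Sum>k'<n. u k k' * u (Suc k) k')) + w0 n (0, n-1) * (\<Sum>k<n. u 0 k * u (n-1) k)"
      using cycle_edges_sum[OF n] .
    also have "\<dots> = (\<Sum>k<n-1. cos t) + cos t" using path close by simp
    also have "\<dots> = real n * cos t" using n by (simp add: of_nat_diff algebra_simps)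
    finally show ?thesis .
  qed
  have mem: "real n * cos t \<in> sdpset n (cycle_edges n) (w0 n)"
    unfolding sdpset_def using unit val[symmetric] by blast
  have bdd: "bdd_above (sdpset n (cycle_edges n) (w0 n))"
    using sdpset_bound[OF n] by (intro bdd_aboveI) blast
  show ?thesis unfolding sdp_alt t_def[symmetric] using mem bdd by (rule cSup_upper)
qed

theorem mainTheorem6:
  fixes n :: nat
  assumes "n \<ge> 3"
  shows "grothendieck_const n (cycle_edges n) = real n / (real n - 2) * cos (pi / real n)"
proof -
  have n: "3 \<le> n" using assms by simp
  define C where "C = real n / (real n - 2) * cos (pi / real n)"
  have up: "(SUP w. sdp n (cycle_edges n) w / ip n (cycle_edges n) w) \<le> C"
    unfolding C_def using ratio_le[OF n] by (intro cSUP_least) auto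
  have bdd: "bdd_above (range (\<lambda>w. sdp n (cycle_edges n) w / ip n (cycle_edges n) w))"
    using ratio_le[OF n] by (intro bdd_aboveI) blast
  have "C \<le> sdp n (cycle_edges n) (w0 n) / ip n (cycle_edges n) (w0 n)"
  proof -
    have ipe: "ip n (cycle_edges n) (w0 n) = real n - 2" using ip_w0_le[OF n] ip_w0_ge[OF n] by simp
    have "0 < real n - 2" using n by simp
    then show ?thesis unfolding C_def ipe using sdp_w0[OF n]
      by (simp add: divide_right_mono)
  qed
  then have lo: "C \<le> (SUP w. sdp n (cycle_edges n) w / ip n (cycle_edges n) w)"
    using bdd by (intro cSUP_upper2) auto
  show ?thesis unfolding grothendieck_const_def using up lo C_def by simp
qed


end
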